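(* Let $n\ge1$ and $\mathbb{P}\in\mathcal{P}_n$. Let \[ \mathcal{T}=\big\{T\in\mathbb{R}_{++}^{2\times n}:\ \mathbf{P}_{\mathbf{z}\sim\mathbb{P}}[z_j=T_{1j}/T_{2j}]=0\ \text{for all } j\in[n]\big\}. \] Then $R_n(\mathbb{P})=\sup_{T\in\mathcal{T}}R_n(\mathbb{P},T)$.
   Context: Scheduling on two machines with $n$ tasks. A processing-time matrix is $T=(T_{ij})\in\mathbb{R}_{++}^{2\times n}$. An allocation is $X\in\{0,1\}^{2\times n}$ with $X_{1j}+X_{2j}=1$; makespan $M(X,T)=\max_{i\in\{1,2\}}\sum_j X_{ij}T_{ij}$; $M^*(T)=\min_X M(X,T)$. $\mathcal{P}_n$ is the set of Borel probability measures on $\mathbb{R}^n$ supported in $\mathbb{R}_{++}^n$. For $\mathbb{P}\in\mathcal{P}_n$, algorithm $\mathcal{A}^{\mathbb{P}}$ draws $\mathbf{z}\sim\mathbb{P}$ and sends task $j$ to machine 1 iff $T_{1j}/T_{2j}<z_j$ (else to machine 2). $M(\mathbb{P},T)$ is the expected makespan of this allocation, $R_n(\mathbb{P},T)=M(\mathbb{P},T)/M^*(T)$, and $R_n(\mathbb{P})=\sup_{T\in\mathbb{R}_{++}^{2\times n}}R_n(\mathbb{P},T)\in[1,\infty]$. *)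

theory Defs
  imports "HOL-Probability.Probability"
begin

text \<open>Processing-time matrices and allocations are 2 x n real matrices
  (rows indexed by the numeral type 2, with rows 1 and 2; columns by a finite type 'n,
  so n = CARD('n) \<ge> 1).\<close>

definition pos_matrix :: "real^'n^2 \<Rightarrow> bool" where
  "pos_matrix T \<longleftrightarrow> (\<forall>i j. 0 < T$i$j)"

definition valid_alloc :: "real^'n^2 \<Rightarrow> bool" where
  "valid_alloc X \<longleftrightarrow> (\<forall>i j. X$i$j \<in> {0,1}) \<and> (\<forall>j. X$1$j + X$2$j = 1)"

definition makespan :: "real^'n^2 \<Rightarrow> real^'n^2 \<Rightarrow> real" where
  "makespan X T = Max (range (\<lambda>i::2. \<Sum>j\<in>UNIV. X$i$j * T$i$j))"

definition opt_makespan :: "real^'n^2 \<Rightarrow> real" where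
  "opt_makespan T = Min {makespan X T | X. valid_alloc X}"

definition alg_alloc :: "real^'n \<Rightarrow> real^'n^2 \<Rightarrow> real^'n^2" where
  "alg_alloc z T = (\<chi> i j. if (T$1$j / T$2$j < z$j) = (i = 1) then 1 else 0)"

definition exp_makespan :: "(real^'n) measure \<Rightarrow> real^'n^2 \<Rightarrow> real" where
  "exp_makespan P T = (\<integral>z. makespan (alg_alloc z T) T \<partial>P)"

definition ratio_T :: "(real^'n) measure \<Rightarrow> real^'n^2 \<Rightarrow> real" where
  "ratio_T P T = exp_makespan P T / opt_makespan T"

definition ratio :: "(real^'n) measure \<Rightarrow> ereal" where
  "ratio P = (SUP T\<in>{T. pos_matrix T}. ereal (ratio_T P T))"

definition admissible_measure :: "(real^'n) measure \<Rightarrow> bool" where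
  "admissible_measure P \<longleftrightarrow> prob_space P \<and> sets P = sets borel \<and>
     (AE z in P. \<forall>j. 0 < z$j)"

end

theory Submission
  imports Defs
begin

lemma makespan_2: "makespan X T = max (\<Sum>j\<in>UNIV. X$1$j * T$1$j) (\<Sum>j\<in>UNIV. X$2$j * T$2$j)"
  unfolding makespan_def by (simp add: UNIV_2 image_insert max.commute)

lemma alg1: "alg_alloc z T $1$j = (if T$1$j / T$2$j < z$j then 1 else 0)"
  by (simp add: alg_alloc_def)
lemma alg2: "alg_alloc z T $2$j = (if T$1$j / T$2$j < z$j then 0 else 1)"
  by (simp add: alg_alloc_def)

lemma valid_alg: "valid_alloc (alg_alloc z T)"
  unfolding valid_alloc_def by (auto simp: forall_2 alg1 alg2)

lemma finite_valid: "finite {X::real^'n^2. valid_alloc X}"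
proof -
  have "{X::real^'n^2. valid_alloc X} \<subseteq> range (\<lambda>b::'n\<Rightarrow>bool. (\<chi> i j. if b j = (i=1) then 1 else 0)::real^'n^2)"
  proof
    fix X :: "real^'n^2" assume "X \<in> {X. valid_alloc X}"
    then have v: "\<And>i j. X$i$j \<in> {0,1}" "\<And>j. X$1$j + X$2$j = 1" by (auto simp: valid_alloc_def)
    have eq: "X = (\<chi> i j. if (X$1$j = 1) = (i=1) then 1 else 0)"
    proof (intro vec_eq_iff[THEN iffD2] allI)
      fix i j
      show "X$i$j = (\<chi> i j. if (X$1$j = 1) = (i=1) then 1 else 0)$i$j"
        using v(1)[of 1 j] v(2)[of j] exhaust_2[of i] by auto
    qed
    show "X \<in> range (\<lambda>b::'n\<Rightarrow>bool. (\<chi> i j. if b j = (i=1) then 1 else 0)::real^'n^2)"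
      apply (rule image_eqI[where x="\<lambda>j. X$1$j = 1"]) using eq by auto
  qed
  then show ?thesis by (rule finite_subset) simp
qed

lemma valid_nonneg: "valid_alloc X \<Longrightarrow> 0 \<le> X$i$j"
  unfolding valid_alloc_def by (metis empty_iff insert_iff order_refl zero_le_one)

lemma makespan_pos: assumes "valid_alloc X" "pos_matrix T" shows "0 < makespan (X::real^'n^2) T"
proof -
  obtain j0 :: 'n where True by simp
  have v: "\<And>i j. X$i$j \<in> {0,1}" "\<And>j. X$1$j + X$2$j = 1" using assms by (auto simp: valid_alloc_def)
  have p: "\<And>i j. 0 < T$i$j" using assms by (auto simp: pos_matrix_def)
  have "0 < (\<Sum>j\<in>UNIV. X$1$j * T$1$j) + (\<Sum>j\<in>UNIV. X$2$j * T$2$j)"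
    unfolding sum.distrib[symmetric]
  proof (rule sum_pos)
    fix j :: 'n show "0 < X$1$j * T$1$j + X$2$j * T$2$j"
      using v(1)[of 1 j] v(2)[of j] p[of 1 j] p[of 2 j] by auto
  qed auto
  then show ?thesis unfolding makespan_2 by linarith
qed

lemma opt_facts:
  assumes "pos_matrix (T::real^'n^2)"
  shows "0 < opt_makespan T" "\<exists>X. valid_alloc X \<and> opt_makespan T = makespan X T"
    "\<And>X. valid_alloc X \<Longrightarrow> opt_makespan T \<le> makespan X T"
proof -
  have fin: "finite {makespan X T | X. valid_alloc X}"
    unfolding setcompr_eq_image by (rule finite_imageI[OF finite_valid])
  have ne: "{makespan X T | X. valid_alloc X} \<noteq> {}" using valid_alg by blast
  from Min_in[OF fin ne] show "\<exists>X. valid_alloc X \<and> opt_makespan T = makespan X T"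
    unfolding opt_makespan_def by auto
  then show "0 < opt_makespan T" using makespan_pos assms by fastforce
  show "\<And>X. valid_alloc X \<Longrightarrow> opt_makespan T \<le> makespan X T"
    unfolding opt_makespan_def using fin by (intro Min_le) auto
qed

definition Ssum :: "real^'n^2 \<Rightarrow> real" where
  "Ssum T = (\<Sum>j\<in>UNIV. T$1$j + T$2$j)"

lemma f_formula: "makespan (alg_alloc z T) T =
  max (\<Sum>j\<in>UNIV. (if T$1$j / T$2$j < z$j then 1 else 0) * T$1$j)
      (\<Sum>j\<in>UNIV. (if T$1$j / T$2$j < z$j then 0 else 1) * T$2$j)"
  by (simp add: makespan_2 alg1 alg2)

lemma f_meas: "(\<lambda>z. makespan (alg_alloc z T) T) \<in> borel_measurable (borel :: (real^'n) measure)"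
  unfolding f_formula
  by (intro borel_measurable_max borel_measurable_sum borel_measurable_times measurable_If borel_measurable_const) (auto simp: pred_def)

lemma f_bounds: assumes "pos_matrix T"
  shows "0 \<le> makespan (alg_alloc z T) T" "makespan (alg_alloc z T) T \<le> Ssum T"
proof -
  have p: "\<And>i j. 0 < T$i$j" using assms by (auto simp: pos_matrix_def)
  have a: "(\<Sum>j\<in>UNIV. (if T$1$j / T$2$j < z$j then 1 else 0) * T$1$j) \<le> Ssum T"
    unfolding Ssum_def apply (rule sum_mono) subgoal for j using p[of 1 j] p[of 2 j] by auto done
  have b: "(\<Sum>j\<in>UNIV. (if T$1$j / T$2$j < z$j then 0 else 1) * T$2$j) \<le> Ssum T"
    unfolding Ssum_def apply (rule sum_mono) subgoal for j using p[of 1 j] p[of 2 j] by auto done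
  have c: "0 \<le> (\<Sum>j\<in>UNIV. (if T$1$j / T$2$j < z$j then 1 else 0) * T$1$j)"
    apply (rule sum_nonneg) subgoal for j using p[of 1 j] p[of 2 j] by auto done
  show "0 \<le> makespan (alg_alloc z T) T" unfolding f_formula using c by linarith
  show "makespan (alg_alloc z T) T \<le> Ssum T" unfolding f_formula using a b by linarith
qed

lemma makespan_mono: assumes "valid_alloc X" "\<And>i j. T$i$j \<le> T'$i$j"
  shows "makespan X T \<le> makespan X T'"
proof -
  have "\<And>i. (\<Sum>j\<in>UNIV. X$i$j * T$i$j) \<le> (\<Sum>j\<in>UNIV. X$i$j * T'$i$j)"
    by (rule sum_mono, rule mult_left_mono) (use assms(1,2) valid_nonneg[OF assms(1)] in blast)+
  then show ?thesis unfolding makespan_2 by (meson max.mono)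
qed

lemma makespan_scale: assumes "valid_alloc X" "\<And>i j. T'$i$j \<le> a * T$i$j" "0 \<le> a"
  shows "makespan X T' \<le> a * makespan X T"
proof -
  have "\<And>i. (\<Sum>j\<in>UNIV. X$i$j * T'$i$j) \<le> a * (\<Sum>j\<in>UNIV. X$i$j * T$i$j)"
    unfolding sum_distrib_left
  proof (rule sum_mono)
    fix i j
    have "X$i$j * T'$i$j \<le> X$i$j * (a * T$i$j)"
      by (rule mult_left_mono) (use assms(1,2) valid_nonneg[OF assms(1)] in blast)+
    then show "X$i$j * T'$i$j \<le> a * (X$i$j * T$i$j)" by (simp add: algebra_simps)
  qed
  then have h1: "(\<Sum>j\<in>UNIV. X$1$j * T'$1$j) \<le> a * (\<Sum>j\<in>UNIV. X$1$j * T$1$j)"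
    and h2: "(\<Sum>j\<in>UNIV. X$2$j * T'$2$j) \<le> a * (\<Sum>j\<in>UNIV. X$2$j * T$2$j)" by auto
  have m1: "a * (\<Sum>j\<in>UNIV. X$1$j * T$1$j) \<le> a * makespan X T"
    unfolding makespan_2 by (rule mult_left_mono) (use assms(3) in auto)
  have m2: "a * (\<Sum>j\<in>UNIV. X$2$j * T$2$j) \<le> a * makespan X T"
    unfolding makespan_2 by (rule mult_left_mono) (use assms(3) in auto)
  show ?thesis using h1 h2 m1 m2 unfolding makespan_2[of X T'] by linarith
qed

lemma approx:
  fixes P :: "(real^'n) measure" and T :: "real^'n^2"
  assumes adm: "admissible_measure P" and pos: "pos_matrix T" and cr: "c < ratio_T P T"
  shows "\<exists>T'. pos_matrix T' \<and> (\<forall>j. measure P {z \<in> space P. z$j = T'$1$j / T'$2$j} = 0)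
      \<and> c < ratio_T P T'"
proof -
  interpret prob_space P using adm by (simp add: admissible_measure_def)
  have setsP: "sets P = sets borel" using adm by (simp add: admissible_measure_def)
  have sp: "space P = UNIV" using sets_eq_imp_space_eq[OF setsP] by simp
  have meq: "measurable P (borel :: real measure) = measurable borel borel"
    by (rule measurable_cong_sets[OF setsP refl])
  have p: "\<And>i j. 0 < T$i$j" using pos by (auto simp: pos_matrix_def)
  define r where "r j = T$1$j / T$2$j" for j
  have rpos: "\<And>j. 0 < r j" unfolding r_def using p by simp
  have atom: "\<exists>x\<in>{a<..<b}. measure P {z\<in>space P. z$j = x} = 0" if ab: "a < b" for j and a b :: real
  proof -
    let ?Q = "distr P borel (\<lambda>z. z$j)"
    have gm: "(\<lambda>z::real^'n. z$j) \<in> measurable P borel" unfolding meq by simp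
    have "prob_space ?Q" by (rule prob_space_distr[OF gm])
    then have "finite_measure ?Q" by (simp add: prob_space.finite_measure)
    then have cnt: "countable {x. measure ?Q {x} \<noteq> 0}" by (rule finite_measure.countable_support)
    obtain x where x: "x \<in> {a<..<b}" "x \<notin> {x. measure ?Q {x} \<noteq> 0}"
      using open_minus_countable[OF cnt, of "{a<..<b}"] ab by auto
    have "measure ?Q {x} = measure P ((\<lambda>z. z$j) -` {x} \<inter> space P)"
      by (rule measure_distr[OF gm]) simp
    also have "(\<lambda>z. z$j) -` {x} \<inter> space P = {z\<in>space P. z$j = x}" by auto
    finally show ?thesis using x by auto
  qed
  define d where "d k = inverse (real (Suc k))" for k
  have dpos: "\<And>k. 0 < d k" unfolding d_def by simp
  have "\<forall>k j. \<exists>y. y \<in> {r j<..<r j*(1+d k)} \<and> measure P {z\<in>space P. z$j = y} = 0"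
  proof (intro allI)
    fix k j
    have "r j < r j * (1 + d k)" using rpos[of j] dpos[of k] by (simp add: algebra_simps)
    then show "\<exists>y. y \<in> {r j<..<r j*(1+d k)} \<and> measure P {z\<in>space P. z$j = y} = 0"
      using atom by blast
  qed
  then obtain x where x: "\<And>k j. x k j \<in> {r j<..<r j*(1+d k)}"
    "\<And>k j. measure P {z\<in>space P. z$j = x k j} = 0" by metis
  define T' where "T' k = (\<chi> i j. if i = 1 then x k j * T$2$j else T$i$j)" for k
  have T'1: "\<And>k j. T' k $1$j = x k j * T$2$j" and T'2: "\<And>k j. T' k $2$j = T$2$j"
    unfolding T'_def by simp_all
  have xpos: "\<And>k j. 0 < x k j" using x(1) rpos by (meson greaterThanLessThan_iff less_trans)
  have T'pos: "pos_matrix (T' k)" for k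
    unfolding pos_matrix_def forall_2 T'1 T'2 using p xpos by simp
  have T'rat: "\<And>k j. T' k $1$j / T' k $2$j = x k j" unfolding T'1 T'2 using p
    by (simp add: less_imp_neq[symmetric])
  have T'good: "\<forall>j. measure P {z \<in> space P. z$j = T' k$1$j / T' k$2$j} = 0" for k
    unfolding T'rat using x(2) by simp
  define B where "B k j = {z::real^'n. r j < z$j \<and> z$j \<le> r j*(1+d k)}" for k j
  have Bsets: "B k j \<in> sets P" for k j
    unfolding setsP B_def by measurable
  have dmono: "d m \<le> d k" if "k \<le> m" for k m unfolding d_def using that
    by (simp add: le_imp_inverse_le)
  have Bdec: "decseq (\<lambda>k. B k j)" for j
  proof (rule decseq_SucI)
    fix k
    have "r j * (1 + d (Suc k)) \<le> r j * (1 + d k)"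
      using dmono[of k "Suc k"] rpos[of j] by (simp add: mult_left_mono)
    then show "B (Suc k) j \<subseteq> B k j" unfolding B_def by auto
  qed
  have Binter: "(\<Inter>k. B k j) = {}" for j
  proof (rule ccontr)
    assume "(\<Inter>k. B k j) \<noteq> {}"
    then obtain z where z: "\<And>k. z \<in> B k j" by blast
    then have e: "0 < z$j - r j" unfolding B_def by auto
    obtain k :: nat where k: "r j / (z$j - r j) < real k" using reals_Archimedean2 by blast
    have "r j < real (Suc k) * (z$j - r j)" using k e by (simp add: field_simps)
    then have "r j * d k < z$j - r j" unfolding d_def using e by (simp add: field_simps)
    moreover have "z$j \<le> r j * (1 + d k)" using z[of k] unfolding B_def by auto
    ultimately show False by (simp add: algebra_simps)
  qed
  have Blim: "(\<lambda>k. measure P (B k j)) \<longlonglongrightarrow> 0" for j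
    using finite_Lim_measure_decseq[of "\<lambda>k. B k j"] Bsets Bdec Binter by auto
  define pk where "pk k = (\<Sum>j\<in>UNIV. measure P (B k j))" for k
  have plim: "pk \<longlonglongrightarrow> 0" unfolding pk_def
    using tendsto_sum[of UNIV "\<lambda>j k. measure P (B k j)" "\<lambda>_. 0" sequentially] Blim by simp
  have dlim: "d \<longlonglongrightarrow> 0" unfolding d_def by (rule LIMSEQ_inverse_real_of_nat)
  define E where "E = exp_makespan P T"
  define Om where "Om = opt_makespan T"
  define S where "S = Ssum T"
  have Opos: "0 < Om" unfolding Om_def using opt_facts(1)[OF pos] .
  define g where "g k = (E - S * pk k) / ((1 + d k) * Om)" for k
  have glim: "g \<longlonglongrightarrow> (E - S * 0) / ((1 + 0) * Om)" unfolding g_def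
    by (intro tendsto_intros plim dlim) (use Opos in simp)
  then have glim': "g \<longlonglongrightarrow> ratio_T P T" unfolding ratio_T_def E_def Om_def by simp
  obtain k where gk: "c < g k"
    using order_tendstoD(1)[OF glim' cr] by (meson eventually_sequentially order_refl)
  have fint: "integrable P (\<lambda>z. makespan (alg_alloc z U) U)" if "pos_matrix U" for U
  proof (rule integrable_const_bound[where B="Ssum U"])
    show "AE z in P. norm (makespan (alg_alloc z U) U) \<le> Ssum U"
      using f_bounds[OF that] by simp
    show "(\<lambda>z. makespan (alg_alloc z U) U) \<in> borel_measurable P" unfolding meq by (rule f_meas)
  qed
  define D where "D = (\<Union>j\<in>UNIV. B k j)"
  have Dsets: "D \<in> sets P" unfolding D_def using Bsets by auto
  have pw: "makespan (alg_alloc z T) T \<le> makespan (alg_alloc z (T' k)) (T' k) + S * indicator D z" for z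
  proof (cases "z \<in> D")
    case True
    then show ?thesis using f_bounds[OF pos, of z] f_bounds[OF T'pos[of k], of z] unfolding S_def by simp
  next
    case False
    have same: "(r j < z$j) = (x k j < z$j)" for j
    proof -
      have "z \<notin> B k j" using False unfolding D_def by auto
      then show ?thesis using x(1)[of k j] unfolding B_def by auto
    qed
    have "alg_alloc z T = alg_alloc z (T' k)"
      unfolding alg_alloc_def T'rat using same unfolding r_def by simp
    moreover have "makespan (alg_alloc z T) T \<le> makespan (alg_alloc z T) (T' k)"
    proof (rule makespan_mono[OF valid_alg])
      fix i j
      show "T$i$j \<le> T' k$i$j"
      proof (cases "i = 1")
        case True
        have "T$1$j = r j * T$2$j" unfolding r_def using p[of 2 j] by simp
        also have "\<dots> \<le> x k j * T$2$j" using x(1)[of k j] p[of 2 j] by simp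
        finally show ?thesis using True T'1 by simp
      next
        case False
        then have "i = 2" using exhaust_2[of i] by simp
        then show ?thesis using T'2 by simp
      qed
    qed
    ultimately show ?thesis using False by simp
  qed
  have E_le: "E \<le> exp_makespan P (T' k) + S * pk k"
  proof -
    have "E \<le> (\<integral>z. makespan (alg_alloc z (T' k)) (T' k) + S * indicator D z \<partial>P)"
      unfolding E_def exp_makespan_def
      apply (rule integral_mono[OF fint[OF pos] _ pw]) using fint[OF T'pos[of k]] Dsets by (auto simp: emeasure_eq_measure)
    also have "\<dots> = exp_makespan P (T' k) + S * measure P D"
    proof -
      have i2: "integrable P (\<lambda>z. S * indicator D z :: real)"
        by (rule integrable_mult_right, rule integrable_real_indicator[OF Dsets]) (simp add: emeasure_eq_measure)
      have i3: "integrable P (indicator D :: _ \<Rightarrow> real)"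
        by (rule integrable_real_indicator[OF Dsets]) (simp add: emeasure_eq_measure)
      show ?thesis unfolding exp_makespan_def
        by (simp add: Bochner_Integration.integral_add[OF fint[OF T'pos[of k]] i2] Bochner_Integration.integral_mult_right[OF i3] sp)
    qed
    also have "\<dots> \<le> exp_makespan P (T' k) + S * pk k"
    proof -
      have "measure P D \<le> pk k" unfolding D_def pk_def
        by (rule measure_UNION_le) (use Bsets in auto)
      then have "S * measure P D \<le> S * pk k"
        using f_bounds[OF pos] unfolding S_def by (intro mult_left_mono) (auto intro: order_trans)
      then show ?thesis by simp
    qed
    finally show ?thesis .
  qed
  obtain X0 where X0: "valid_alloc X0" "Om = makespan X0 T" using opt_facts(2)[OF pos] unfolding Om_def by blast
  have O'le: "opt_makespan (T' k) \<le> (1 + d k) * Om"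
  proof -
    have "opt_makespan (T' k) \<le> makespan X0 (T' k)" by (rule opt_facts(3)[OF T'pos X0(1)])
    also have "\<dots> \<le> (1 + d k) * makespan X0 T"
    proof (rule makespan_scale[OF X0(1)])
      fix i j
      show "T' k $i$j \<le> (1 + d k) * T$i$j"
      proof (cases "i = 1")
        case True
        have "x k j * T$2$j \<le> r j * (1 + d k) * T$2$j" using x(1)[of k j] p[of 2 j] by simp
        also have "\<dots> = (1 + d k) * T$1$j" unfolding r_def using p[of 2 j] by simp
        finally show ?thesis using True T'1 by simp
      next
        case False
        then have "i = 2" using exhaust_2[of i] by simp
        then show ?thesis using T'2 p[of 2 j] dpos[of k] by simp
      qed
    qed (use dpos[of k] in simp)
    finally show ?thesis using X0 by simp
  qed
  have O'pos: "0 < opt_makespan (T' k)" by (rule opt_facts(1)[OF T'pos])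
  have E'nn: "0 \<le> exp_makespan P (T' k)"
    unfolding exp_makespan_def by (rule integral_nonneg_AE) (use f_bounds[OF T'pos] in simp)
  have "g k \<le> ratio_T P (T' k)"
  proof (cases "E - S * pk k \<le> 0")
    case True
    then have "g k \<le> 0" unfolding g_def using Opos dpos[of k]
      by (intro divide_nonpos_pos) auto
    moreover have "0 \<le> ratio_T P (T' k)" unfolding ratio_T_def using E'nn O'pos by simp
    ultimately show ?thesis by linarith
  next
    case False
    show ?thesis unfolding g_def ratio_T_def
      by (rule frac_le) (use E_le E'nn O'pos O'le in auto)
  qed
  then show ?thesis using gk T'pos T'good by (intro exI[of _ "T' k"]) auto
qed

theorem theorem2:
  fixes P :: "(real^'n) measure"
  assumes "admissible_measure P"
  shows "ratio P =
    (SUP T\<in>{T. pos_matrix T \<and> (\<forall>j. measure P {z \<in> space P. z$j = T$1$j / T$2$j} = 0)}.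
       ereal (ratio_T P T))"
proof (rule antisym)
  let ?G = "{T. pos_matrix T \<and> (\<forall>j. measure P {z \<in> space P. z$j = T$1$j / T$2$j} = 0)}"
  show "ratio P \<le> (SUP T\<in>?G. ereal (ratio_T P T))"
    unfolding ratio_def
  proof (rule SUP_least)
    fix T :: "real^'n^2" assume "T \<in> {T. pos_matrix T}"
    then have pos: "pos_matrix T" by simp
    show "ereal (ratio_T P T) \<le> (SUP T\<in>?G. ereal (ratio_T P T))"
    proof (subst le_SUP_iff, intro allI impI)
      fix y assume y: "y < ereal (ratio_T P T)"
      obtain c where c: "y \<le> ereal c" "c < ratio_T P T"
      proof (cases y)
        case (real r) then show ?thesis using y that by auto
      next
        case PInf then show ?thesis using y by auto
      next
        case MInf then show ?thesis using that[of "ratio_T P T - 1"] by auto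
      qed
      obtain T' where "pos_matrix T'" "\<forall>j. measure P {z \<in> space P. z$j = T'$1$j / T'$2$j} = 0"
        "c < ratio_T P T'" using approx[OF assms pos c(2)] by blast
      then show "\<exists>i\<in>?G. y < ereal (ratio_T P i)" using c(1)
        by (intro bexI[of _ T']) (auto intro: order.strict_trans1)
    qed
  qed
  show "(SUP T\<in>?G. ereal (ratio_T P T)) \<le> ratio P"
    unfolding ratio_def by (rule SUP_subset_mono) auto
qed

end
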